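(* Let $P,Q,\widetilde P,\widetilde Q\in\mathbb{R}^{3\times3}$ be symmetric matrices with entries $p_{ij},q_{ij},\widetilde p_{ij},\widetilde q_{ij}$. Let $\Omega=\{(x_i,y_i)\}_{i=1}^N\subset\mathbb{R}^2$ with $\operatorname{rank}V_\Omega=15$, write $\bar x=(x,y,1)^T$, and suppose that $$\frac{\bar x^TP\bar x}{\bar x^TQ\bar x}=\frac{\bar x^T\widetilde P\bar x}{\bar x^T\widetilde Q\bar x}\quad\text{for all }(x,y)\in\Omega$$ (with the denominators nonzero). Suppose moreover that one of the following holds. Case 1: $q_{11}\ne0$, $q_{22}\ne0$, $q_{33}\ne0$, and $4(p_{11}q_{12}-p_{12}q_{11})(p_{22}q_{12}-p_{12}q_{22})+(p_{11}q_{22}-p_{22}q_{11})^2\ne0$, $4(p_{11}q_{13}-p_{13}q_{11})(p_{33}q_{13}-p_{13}q_{33})+(p_{11}q_{33}-p_{33}q_{11})^2\ne0$, $4(p_{22}q_{23}-p_{23}q_{22})(p_{33}q_{23}-p_{23}q_{33})+(p_{22}q_{33}-p_{33}q_{22})^2\ne0$. Case 2: $p_{j2}=p_{2j}=q_{j2}=q_{2j}=\widetilde p_{j2}=\widetilde p_{2j}=\widetilde q_{j2}=\widetilde q_{2j}=0$ for all $j\in\{1,2,3\}$, $q_{11}\ne0$, $q_{33}\ne0$, and $4(p_{11}q_{13}-p_{13}q_{11})(p_{33}q_{13}-p_{13}q_{33})+(p_{11}q_{33}-p_{33}q_{11})^2\ne0$. Then there is a constant scalar $t\ne0$ with $P=t\widetilde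 P$ and $Q=t\widetilde Q$.
   Context: For a finite set of locations $\Omega=\{(x_i,y_i)\}_{i=1}^N$, $V_\Omega\in\mathbb{R}^{N\times15}$ denotes the matrix whose $i$-th row consists of all 15 monomials $x_i^py_i^q$ with $p,q\ge0$, $p+q\le4$. *)

theory Defs
  imports "HOL-Analysis.Analysis"
begin

text \<open>Exponent pairs (p,q) with p + q \<le> 4: the 15 bivariate monomials of degree at most 4.\<close>
typedef mono_exp = "{pq::nat\<times>nat. fst pq + snd pq \<le> 4}"
  by (rule exI[of _ "(0,0)"]) simp

instance mono_exp :: finite
proof
  have "finite {pq::nat\<times>nat. fst pq + snd pq \<le> 4}"
    by (rule finite_subset[of _ "{..4} \<times> {..4}"]) auto
  then show "finite (UNIV :: mono_exp set)"
    using finite_imageI[of _ Abs_mono_exp] type_definition.Abs_image[OF type_definition_mono_exp]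
    by metis
qed

definition V_Omega :: "('n::finite \<Rightarrow> real \<times> real) \<Rightarrow> real^mono_exp^'n" where
  "V_Omega pts = (\<chi> i e. fst (pts i) ^ fst (Rep_mono_exp e) * snd (pts i) ^ snd (Rep_mono_exp e))"

definition xbar :: "real \<Rightarrow> real \<Rightarrow> real^3" where
  "xbar x y = vector [x, y, 1]"

definition qform :: "real^3^3 \<Rightarrow> real^3 \<Rightarrow> real" where
  "qform A v = v \<bullet> (A *v v)"

end

theory Submission
  imports Defs
begin
definition pc :: "(nat\<times>nat \<Rightarrow> real) \<Rightarrow> (nat\<times>nat \<Rightarrow> real) \<Rightarrow> nat\<times>nat \<Rightarrow> real" where
  "pc a b pq = (if pq = (0,0) then a (0,0) * b (0,0) else if pq = (0,1) then a (0,1) * b (0,0) + a (0,0) * b (0,1) else if pq = (0,2) then a (0,2) * b (0,0) + a (0,1) * b (0,1) + a (0,0) * b (0,2) else if pq = (0,3) then a (0,2) * b (0,1) + a (0,1) * b (0,2) else if pq = (0,4) then a (0,2) * b (0,2) else if pq = (1,0) then a (1,0) * b (0,0) + a (0,0) * b (1,0) else if pq = (1,1) then a (1,1) * b (0,0) + a (1,0) * b (0,1) + a (0,1) * b (1,0) + a (0,0) * b (1,1) else if pq = (1,2) then a (1,1) * b (0,1) + a (0,2) * b (1,0) + a (1,0) * b (0,2) + a (0,1) * b (1,1) else if pq = (1,3) then a (1,1) * b (0,2) + a (0,2) * b (1,1) else if pq = (2,0) then a (2,0) * b (0,0) + a (1,0) * b (1,0) + a (0,0) * b (2,0) else if pq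 = (2,1) then a (2,0) * b (0,1) + a (1,1) * b (1,0) + a (1,0) * b (1,1) + a (0,1) * b (2,0) else if pq = (2,2) then a (2,0) * b (0,2) + a (1,1) * b (1,1) + a (0,2) * b (2,0) else if pq = (3,0) then a (2,0) * b (1,0) + a (1,0) * b (2,0) else if pq = (3,1) then a (2,0) * b (1,1) + a (1,1) * b (2,0) else if pq = (4,0) then a (2,0) * b (2,0) else 0)"

definition quad :: "(nat\<times>nat \<Rightarrow> real) \<Rightarrow> real \<Rightarrow> real \<Rightarrow> real" where
  "quad a x y = a (2,0)*x*x + a (1,1)*x*y + a (0,2)*y*y + a (1,0)*x + a (0,1)*y + a (0,0)"

definition qco :: "real^3^3 \<Rightarrow> nat\<times>nat \<Rightarrow> real" where
  "qco A pq = (if pq = (2,0) then A$1$1 else if pq = (1,1) then A$1$2+A$2$1 else if pq = (0,2) then A$2$2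
     else if pq = (1,0) then A$1$3+A$3$1 else if pq = (0,1) then A$2$3+A$3$2 else A$3$3)"

definition cf :: "real^3^3 \<Rightarrow> real^3^3 \<Rightarrow> real^3^3 \<Rightarrow> real^3^3 \<Rightarrow> nat\<times>nat \<Rightarrow> real" where
  "cf P Q P' Q' pq = pc (qco P) (qco Q') pq - pc (qco P') (qco Q) pq"

lemma qform_xbar: "qform A (xbar x y) = quad (qco A) x y"
  unfolding qform_def xbar_def quad_def qco_def
  by (simp add: inner_vec_def matrix_vector_mult_def sum_3 algebra_simps)

definition S15 :: "(nat\<times>nat) set" where
  "S15 = {(0,0),(0,1),(0,2),(0,3),(0,4),(1,0),(1,1),(1,2),(1,3),(2,0),(2,1),(2,2),(3,0),(3,1),(4,0)}"

lemma S15_eq: "{pq::nat\<times>nat. fst pq + snd pq \<le> 4} = S15"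
proof
  have mem: "(a,b) \<in> S15" if "a + b \<le> 4" for a b :: nat
  proof -
    have "a = 0 \<or> a = 1 \<or> a = 2 \<or> a = 3 \<or> a = 4" using that by arith
    moreover have "b = 0 \<or> b = 1 \<or> b = 2 \<or> b = 3 \<or> b = 4" using that by arith
    ultimately show ?thesis using that unfolding S15_def by (elim disjE) simp_all
  qed
  show "{pq::nat\<times>nat. fst pq + snd pq \<le> 4} \<subseteq> S15"
  proof
    fix pq :: "nat\<times>nat" assume "pq \<in> {pq. fst pq + snd pq \<le> 4}"
    then show "pq \<in> S15" using mem[of "fst pq" "snd pq"] by simp
  qed
  show "S15 \<subseteq> {pq::nat\<times>nat. fst pq + snd pq \<le> 4}" by (simp add: S15_def)
qed

lemma range_Rep: "range Rep_mono_exp = S15"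
  using type_definition.Rep_range[OF type_definition_mono_exp] S15_eq by simp

lemma card_mono: "CARD(mono_exp) = 15"
proof -
  have "CARD(mono_exp) = card (range Rep_mono_exp)"
    by (simp add: card_image inj_on_def Rep_mono_exp_inject)
  also have "\<dots> = 15" unfolding range_Rep S15_def by simp
  finally show ?thesis .
qed

lemma sum_mono: "(\<Sum>e\<in>UNIV. g (Rep_mono_exp e)) = (\<Sum>pq\<in>S15. g pq)"
proof -
  have "(\<Sum>pq\<in>range Rep_mono_exp. g pq) = (\<Sum>e\<in>UNIV. g (Rep_mono_exp e))"
    by (simp add: sum.reindex inj_on_def Rep_mono_exp_inject)
  then show ?thesis using range_Rep by simp
qed

lemma pc_sum: "(\<Sum>pq\<in>S15. pc a b pq * x ^ fst pq * y ^ snd pq) = quad a x y * quad b x y"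
  unfolding S15_def quad_def
  apply (simp add: pc_def)
  apply (simp add: power2_eq_square power3_eq_cube power4_eq_xxxx)
  by algebra

lemma poly_id: "qform P (xbar x y) * qform Q' (xbar x y) - qform P' (xbar x y) * qform Q (xbar x y)
   = (\<Sum>pq\<in>S15. cf P Q P' Q' pq * x ^ fst pq * y ^ snd pq)"
proof -
  have "(\<Sum>pq\<in>S15. cf P Q P' Q' pq * x ^ fst pq * y ^ snd pq)
     = (\<Sum>pq\<in>S15. pc (qco P) (qco Q') pq * x ^ fst pq * y ^ snd pq - pc (qco P') (qco Q) pq * x ^ fst pq * y ^ snd pq)"
    by (rule sum.cong) (simp_all add: cf_def left_diff_distrib)
  also have "\<dots> = (\<Sum>pq\<in>S15. pc (qco P) (qco Q') pq * x ^ fst pq * y ^ snd pq) - (\<Sum>pq\<in>S15. pc (qco P') (qco Q) pq * x ^ fst pq * y ^ snd pq)"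
    by (rule sum_subtractf)
  finally show ?thesis unfolding qform_xbar pc_sum by simp
qed

lemma binary:
  fixes a0 a1 a2 b0 b1 b2 c0 c1 c2 f0 f1 f2 :: real
  assumes b0: "b0 \<noteq> 0" and R: "4*(a0*b1-a1*b0)*(a2*b1-a1*b2)+(a0*b2-a2*b0)^2 \<noteq> 0"
  and E0: "a0*f0 = c0*b0"
  and E1: "a0*f1 + a1*f0 = c0*b1 + c1*b0"
  and E2: "a0*f2 + 4*a1*f1 + a2*f0 = c0*b2 + 4*c1*b1 + c2*b0"
  and E3: "a1*f2 + a2*f1 = c1*b2 + c2*b1"
  and E4: "a2*f2 = c2*b2"
  shows "\<exists>t. c0 = t*a0 \<and> c1 = t*a1 \<and> c2 = t*a2 \<and> f0 = t*b0 \<and> f1 = t*b1 \<and> f2 = t*b2"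
proof -
  define t where "t = f0/b0"
  have f0: "f0 = t*b0" using b0 by (simp add: t_def)
  have c0: "c0 = t*a0" using E0 b0 unfolding f0 by (metis mult.assoc mult.commute mult_right_cancel)
  let ?R = "4*(a0*b1-a1*b0)*(a2*b1-a1*b2)+(a0*b2-a2*b0)^2"
  have h1: "?R * b0 * (c1 - t*a1) = 0" using E1 E2 E3 E4 unfolding f0 c0 by algebra
  have h2: "?R * b0 * (c2 - t*a2) = 0" using E1 E2 E3 E4 unfolding f0 c0 by algebra
  have h3: "?R * b0 * (f1 - t*b1) = 0" using E1 E2 E3 E4 unfolding f0 c0 by algebra
  have h4: "?R * b0 * (f2 - t*b2) = 0" using E1 E2 E3 E4 unfolding f0 c0 by algebra
  show ?thesis using h1 h2 h3 h4 R b0 f0 c0 by (intro exI[of _ t]) auto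
qed

lemma sym_entry: "transpose A = A \<Longrightarrow> A$j$i = A$i$j"
proof -
  assume h: "transpose A = A"
  have "(transpose A)$i$j = A$j$i" by (simp add: transpose_def)
  then show ?thesis using h by simp
qed

lemma qform_zero: "qform 0 v = 0"
  by (simp add: qform_def)

theorem lemma2:
  fixes P Q P' Q' :: "real^3^3" and pts :: "'n::finite \<Rightarrow> real \<times> real"
  assumes symP: "transpose P = P" and symQ: "transpose Q = Q"
    and symP': "transpose P' = P'" and symQ': "transpose Q' = Q'"
    and rank: "rank (V_Omega pts) = 15"
    and denQ: "\<forall>i. qform Q (xbar (fst (pts i)) (snd (pts i))) \<noteq> 0"
    and denQ': "\<forall>i. qform Q' (xbar (fst (pts i)) (snd (pts i))) \<noteq> 0"
    and eq: "\<forall>i. qform P (xbar (fst (pts i)) (snd (pts i))) / qform Q (xbar (fst (pts i)) (snd (pts i)))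
                = qform P' (xbar (fst (pts i)) (snd (pts i))) / qform Q' (xbar (fst (pts i)) (snd (pts i)))"
    and cases:
      "(Q$1$1 \<noteq> 0 \<and> Q$2$2 \<noteq> 0 \<and> Q$3$3 \<noteq> 0 \<and>
        4 * (P$1$1 * Q$1$2 - P$1$2 * Q$1$1) * (P$2$2 * Q$1$2 - P$1$2 * Q$2$2)
          + (P$1$1 * Q$2$2 - P$2$2 * Q$1$1)^2 \<noteq> 0 \<and>
        4 * (P$1$1 * Q$1$3 - P$1$3 * Q$1$1) * (P$3$3 * Q$1$3 - P$1$3 * Q$3$3)
          + (P$1$1 * Q$3$3 - P$3$3 * Q$1$1)^2 \<noteq> 0 \<and>
        4 * (P$2$2 * Q$2$3 - P$2$3 * Q$2$2) * (P$3$3 * Q$2$3 - P$2$3 * Q$3$3)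
          + (P$2$2 * Q$3$3 - P$3$3 * Q$2$2)^2 \<noteq> 0)
      \<or>
       ((\<forall>j\<in>{1,2,3::3}. P$j$2 = 0 \<and> P$2$j = 0 \<and> Q$j$2 = 0 \<and> Q$2$j = 0 \<and>
                      P'$j$2 = 0 \<and> P'$2$j = 0 \<and> Q'$j$2 = 0 \<and> Q'$2$j = 0) \<and>
        Q$1$1 \<noteq> 0 \<and> Q$3$3 \<noteq> 0 \<and>
        4 * (P$1$1 * Q$1$3 - P$1$3 * Q$1$1) * (P$3$3 * Q$1$3 - P$1$3 * Q$3$3)
          + (P$1$1 * Q$3$3 - P$3$3 * Q$1$1)^2 \<noteq> 0)"
  shows "\<exists>t::real. t \<noteq> 0 \<and> P = t *\<^sub>R P' \<and> Q = t *\<^sub>R Q'"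
proof -
  define X where "X = (\<lambda>i. xbar (fst (pts i)) (snd (pts i)))"
  define c :: "real^mono_exp" where "c = (\<chi> e. cf P Q P' Q' (Rep_mono_exp e))"
  have Vc: "V_Omega pts *v c = 0"
  proof (subst vec_eq_iff, intro allI)
    fix i
    let ?x = "fst (pts i)" and ?y = "snd (pts i)"
    have "(V_Omega pts *v c)$i = (\<Sum>e\<in>UNIV. (\<lambda>pq. cf P Q P' Q' pq * ?x ^ fst pq * ?y ^ snd pq) (Rep_mono_exp e))"
      by (simp add: matrix_vector_mult_def V_Omega_def c_def mult_ac)
    also have "\<dots> = (\<Sum>pq\<in>S15. cf P Q P' Q' pq * ?x ^ fst pq * ?y ^ snd pq)"
      by (rule sum_mono)
    also have "\<dots> = qform P (X i) * qform Q' (X i) - qform P' (X i) * qform Q (X i)"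
      unfolding X_def by (rule poly_id[symmetric])
    also have "\<dots> = 0"
    proof -
      have d1: "qform Q (X i) \<noteq> 0" and d2: "qform Q' (X i) \<noteq> 0" using denQ denQ' X_def by auto
      have "qform P (X i) / qform Q (X i) = qform P' (X i) / qform Q' (X i)" using eq X_def by auto
      with d1 d2 show ?thesis by (simp add: field_simps)
    qed
    finally show "(V_Omega pts *v c)$i = 0$i" by simp
  qed
  have "inj ((*v) (V_Omega pts))" using full_rank_injective[of "V_Omega pts"] rank card_mono by simp
  then have c0: "c = 0" using Vc by (metis injD matrix_vector_mult_0_right)
  have cf0: "cf P Q P' Q' pq = 0" if "pq \<in> S15" for pq
  proof -
    have "pq \<in> range Rep_mono_exp" using that range_Rep by simp
    then obtain e where "pq = Rep_mono_exp e" by blast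
    moreover have "c$e = 0" using c0 by simp
    ultimately show ?thesis by (simp add: c_def)
  qed
  have e40: "cf P Q P' Q' (4,0) = 0" and e31: "cf P Q P' Q' (3,1) = 0"
   and e22: "cf P Q P' Q' (2,2) = 0" and e13: "cf P Q P' Q' (1,3) = 0"
   and e04: "cf P Q P' Q' (0,4) = 0" and e30: "cf P Q P' Q' (3,0) = 0"
   and e20: "cf P Q P' Q' (2,0) = 0" and e10: "cf P Q P' Q' (1,0) = 0"
   and e00: "cf P Q P' Q' (0,0) = 0" and e03: "cf P Q P' Q' (0,3) = 0"
   and e02: "cf P Q P' Q' (0,2) = 0" and e01: "cf P Q P' Q' (0,1) = 0"
    by (auto intro!: cf0 simp: S15_def)
  note syms = sym_entry[OF symP] sym_entry[OF symQ] sym_entry[OF symP'] sym_entry[OF symQ']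
  have s: "P$2$1 = P$1$2" "P$3$1 = P$1$3" "P$3$2 = P$2$3"
          "Q$2$1 = Q$1$2" "Q$3$1 = Q$1$3" "Q$3$2 = Q$2$3"
          "P'$2$1 = P'$1$2" "P'$3$1 = P'$1$3" "P'$3$2 = P'$2$3"
          "Q'$2$1 = Q'$1$2" "Q'$3$1 = Q'$1$3" "Q'$3$2 = Q'$2$3" using syms by auto
  have Y0: "P$1$1*Q'$1$1 = P'$1$1*Q$1$1" using e40 by (simp add: cf_def pc_def qco_def s)
  have Y1: "P$1$1*Q'$1$3 + P$1$3*Q'$1$1 = P'$1$1*Q$1$3 + P'$1$3*Q$1$1" using e30 by (simp add: cf_def pc_def qco_def s; algebra)
  have Y2: "P$1$1*Q'$3$3 + 4*P$1$3*Q'$1$3 + P$3$3*Q'$1$1 = P'$1$1*Q$3$3 + 4*P'$1$3*Q$1$3 + P'$3$3*Q$1$1"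
    using e20 by (simp add: cf_def pc_def qco_def s; algebra)
  have Y3: "P$1$3*Q'$3$3 + P$3$3*Q'$1$3 = P'$1$3*Q$3$3 + P'$3$3*Q$1$3" using e10 by (simp add: cf_def pc_def qco_def s; algebra)
  have Y4: "P$3$3*Q'$3$3 = P'$3$3*Q$3$3" using e00 by (simp add: cf_def pc_def qco_def s)
  have lineY: "\<exists>t. P'$1$1 = t*P$1$1 \<and> P'$1$3 = t*P$1$3 \<and> P'$3$3 = t*P$3$3 \<and>
                   Q'$1$1 = t*Q$1$1 \<and> Q'$1$3 = t*Q$1$3 \<and> Q'$3$3 = t*Q$3$3"
    if "Q$1$1 \<noteq> 0" "4 * (P$1$1 * Q$1$3 - P$1$3 * Q$1$1) * (P$3$3 * Q$1$3 - P$1$3 * Q$3$3)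
          + (P$1$1 * Q$3$3 - P$3$3 * Q$1$1)^2 \<noteq> 0"
    by (rule binary[OF that Y0 Y1 Y2 Y3 Y4])
  have ex: "\<exists>t. (\<forall>i j. P'$i$j = t*P$i$j) \<and> (\<forall>i j. Q'$i$j = t*Q$i$j)"
    using cases
  proof
    assume h: "Q$1$1 \<noteq> 0 \<and> Q$2$2 \<noteq> 0 \<and> Q$3$3 \<noteq> 0 \<and>
        4 * (P$1$1 * Q$1$2 - P$1$2 * Q$1$1) * (P$2$2 * Q$1$2 - P$1$2 * Q$2$2)
          + (P$1$1 * Q$2$2 - P$2$2 * Q$1$1)^2 \<noteq> 0 \<and>
        4 * (P$1$1 * Q$1$3 - P$1$3 * Q$1$1) * (P$3$3 * Q$1$3 - P$1$3 * Q$3$3)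
          + (P$1$1 * Q$3$3 - P$3$3 * Q$1$1)^2 \<noteq> 0 \<and>
        4 * (P$2$2 * Q$2$3 - P$2$3 * Q$2$2) * (P$3$3 * Q$2$3 - P$2$3 * Q$3$3)
          + (P$2$2 * Q$3$3 - P$3$3 * Q$2$2)^2 \<noteq> 0"
    have Z1: "P$1$1*Q'$1$2 + P$1$2*Q'$1$1 = P'$1$1*Q$1$2 + P'$1$2*Q$1$1" using e31 by (simp add: cf_def pc_def qco_def s; algebra)
    have Z2: "P$1$1*Q'$2$2 + 4*P$1$2*Q'$1$2 + P$2$2*Q'$1$1 = P'$1$1*Q$2$2 + 4*P'$1$2*Q$1$2 + P'$2$2*Q$1$1"
      using e22 by (simp add: cf_def pc_def qco_def s; algebra)
    have Z3: "P$1$2*Q'$2$2 + P$2$2*Q'$1$2 = P'$1$2*Q$2$2 + P'$2$2*Q$1$2" using e13 by (simp add: cf_def pc_def qco_def s; algebra)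
    have Z4: "P$2$2*Q'$2$2 = P'$2$2*Q$2$2" using e04 by (simp add: cf_def pc_def qco_def s)
    have W1: "P$2$2*Q'$2$3 + P$2$3*Q'$2$2 = P'$2$2*Q$2$3 + P'$2$3*Q$2$2" using e03 by (simp add: cf_def pc_def qco_def s; algebra)
    have W2: "P$2$2*Q'$3$3 + 4*P$2$3*Q'$2$3 + P$3$3*Q'$2$2 = P'$2$2*Q$3$3 + 4*P'$2$3*Q$2$3 + P'$3$3*Q$2$2"
      using e02 by (simp add: cf_def pc_def qco_def s; algebra)
    have W3: "P$2$3*Q'$3$3 + P$3$3*Q'$2$3 = P'$2$3*Q$3$3 + P'$3$3*Q$2$3" using e01 by (simp add: cf_def pc_def qco_def s; algebra)
    obtain t1 where T1: "P'$1$1 = t1*P$1$1" "P'$1$2 = t1*P$1$2" "P'$2$2 = t1*P$2$2"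
                  "Q'$1$1 = t1*Q$1$1" "Q'$1$2 = t1*Q$1$2" "Q'$2$2 = t1*Q$2$2"
      using binary[OF _ _ Y0 Z1 Z2 Z3 Z4] h by blast
    obtain t2 where T2: "P'$1$1 = t2*P$1$1" "P'$1$3 = t2*P$1$3" "P'$3$3 = t2*P$3$3"
                  "Q'$1$1 = t2*Q$1$1" "Q'$1$3 = t2*Q$1$3" "Q'$3$3 = t2*Q$3$3"
      using lineY h by blast
    obtain t3 where T3: "P'$2$2 = t3*P$2$2" "P'$2$3 = t3*P$2$3" "P'$3$3 = t3*P$3$3"
                  "Q'$2$2 = t3*Q$2$2" "Q'$2$3 = t3*Q$2$3" "Q'$3$3 = t3*Q$3$3"
      using binary[OF _ _ Z4 W1 W2 W3 Y4] h by blast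
    have "t2 = t1" using T1(4) T2(4) h by simp
    moreover have "t3 = t1" using T1(6) T3(4) h by simp
    ultimately show ?thesis using T1 T2 T3 s
      by (intro exI[of _ t1]) (simp add: forall_3)
  next
    assume h: "(\<forall>j\<in>{1,2,3::3}. P$j$2 = 0 \<and> P$2$j = 0 \<and> Q$j$2 = 0 \<and> Q$2$j = 0 \<and>
                      P'$j$2 = 0 \<and> P'$2$j = 0 \<and> Q'$j$2 = 0 \<and> Q'$2$j = 0) \<and>
        Q$1$1 \<noteq> 0 \<and> Q$3$3 \<noteq> 0 \<and>
        4 * (P$1$1 * Q$1$3 - P$1$3 * Q$1$1) * (P$3$3 * Q$1$3 - P$1$3 * Q$3$3)
          + (P$1$1 * Q$3$3 - P$3$3 * Q$1$1)^2 \<noteq> 0"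
    obtain t2 where T2: "P'$1$1 = t2*P$1$1" "P'$1$3 = t2*P$1$3" "P'$3$3 = t2*P$3$3"
                  "Q'$1$1 = t2*Q$1$1" "Q'$1$3 = t2*Q$1$3" "Q'$3$3 = t2*Q$3$3"
      using lineY h by blast
    have z: "P$1$2 = 0" "P$2$1 = 0" "P$2$2 = 0" "P$2$3 = 0" "P$3$2 = 0"
            "Q$1$2 = 0" "Q$2$1 = 0" "Q$2$2 = 0" "Q$2$3 = 0" "Q$3$2 = 0"
            "P'$1$2 = 0" "P'$2$1 = 0" "P'$2$2 = 0" "P'$2$3 = 0" "P'$3$2 = 0"
            "Q'$1$2 = 0" "Q'$2$1 = 0" "Q'$2$2 = 0" "Q'$2$3 = 0" "Q'$3$2 = 0"
      using conjunct1[OF h] by simp_all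
    show ?thesis using T2 s(2,5,8,11) z
      by (intro exI[of _ t2]) (simp add: forall_3)
  qed
  then obtain t where tP: "\<forall>i j. P'$i$j = t*P$i$j" and tQ: "\<forall>i j. Q'$i$j = t*Q$i$j" by blast
  have P': "P' = t *\<^sub>R P" using tP by (simp add: vec_eq_iff)
  have Q': "Q' = t *\<^sub>R Q" using tQ by (simp add: vec_eq_iff)
  have "t \<noteq> 0"
  proof
    assume "t = 0"
    then have "Q' = 0" using Q' by simp
    then show False using denQ' by (simp add: qform_zero)
  qed
  then show ?thesis using P' Q' by (intro exI[of _ "1/t"]) simp
qed

end
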